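(* Let $S$ be a finite set of points in the plane and let $\mathcal D$ be a set of $k$ pairwise non-opposite directions such that $S$ is in $\mathcal D$-general position. If $T$ is a $\mathcal D$-monotone geometric spanning tree of $S$, then $T$ has at most $2k$ leaves.
   Context: A direction is a unit vector in $\mathbb{R}^2$; two directions $d,d'$ are opposite if $d'=-d$. A finite point set $S$ is in $d$-general position if no two points of $S$ lie on a common line orthogonal to $d$; $S$ is in $\mathcal D$-general position if it is in $d$-general position for every $d\in\mathcal D$. A geometric path $\langle p_1,\dots,p_r\rangle$ is $d$-monotone if its vertex set is in $d$-general position and $\langle p_1,d\rangle,\dots,\langle p_r,d\rangle$ is strictly increasing or strictly decreasing. A geometric spanning tree of $S$ is a tree with vertex set $S$ whose edges are straight segments; it is $\mathcal D$-monotone if for every pair of vertices $u,v$ there is $d\in\mathcal D$ such that the path of $T$ from $u$ to $v$ is $d$-monotone. *)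

theory Defs
  imports "HOL-Analysis.Analysis"
begin

type_synonym point = "real^2"

definition direction :: "point \<Rightarrow> bool" where
  "direction d \<longleftrightarrow> norm d = 1"

definition opposite :: "point \<Rightarrow> point \<Rightarrow> bool" where
  "opposite d d' \<longleftrightarrow> d' = - d"

text \<open>No two (distinct) points of S lie on a common line orthogonal to d.\<close>
definition d_general_position :: "point \<Rightarrow> point set \<Rightarrow> bool" where
  "d_general_position d S \<longleftrightarrow>
     (\<forall>p\<in>S. \<forall>q\<in>S. p \<noteq> q \<longrightarrow> inner p d \<noteq> inner q d)"

definition D_general_position :: "point set \<Rightarrow> point set \<Rightarrow> bool" where
  "D_general_position D S \<longleftrightarrow> (\<forall>d\<in>D. d_general_position d S)"

definition d_monotone :: "point \<Rightarrow> point list \<Rightarrow> bool" where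
  "d_monotone d ps \<longleftrightarrow> d_general_position d (set ps) \<and>
     (sorted_wrt (<) (map (\<lambda>p. inner p d) ps) \<or> sorted_wrt (>) (map (\<lambda>p. inner p d) ps))"

text \<open>Graphs on a vertex set V with edge set E (edges are 2-element subsets of V,
  drawn as straight segments).\<close>
definition graph :: "point set \<Rightarrow> point set set \<Rightarrow> bool" where
  "graph V E \<longleftrightarrow> finite V \<and> (\<forall>e\<in>E. e \<subseteq> V \<and> card e = 2)"

definition is_path :: "point set \<Rightarrow> point set set \<Rightarrow> point list \<Rightarrow> bool" where
  "is_path V E ps \<longleftrightarrow> ps \<noteq> [] \<and> distinct ps \<and> set ps \<subseteq> V \<and>
     (\<forall>i. Suc i < length ps \<longrightarrow> {ps ! i, ps ! Suc i} \<in> E)"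

definition connected_graph :: "point set \<Rightarrow> point set set \<Rightarrow> bool" where
  "connected_graph V E \<longleftrightarrow> V \<noteq> {} \<and>
     (\<forall>u\<in>V. \<forall>v\<in>V. \<exists>ps. is_path V E ps \<and> hd ps = u \<and> last ps = v)"

definition acyclic_graph :: "point set \<Rightarrow> point set set \<Rightarrow> bool" where
  "acyclic_graph V E \<longleftrightarrow>
     \<not> (\<exists>ps. is_path V E ps \<and> length ps \<ge> 3 \<and> {last ps, hd ps} \<in> E)"

definition spanning_tree :: "point set \<Rightarrow> point set set \<Rightarrow> bool" where
  "spanning_tree S E \<longleftrightarrow> graph S E \<and> connected_graph S E \<and> acyclic_graph S E"

text \<open>In a tree the path between u and v is unique, so "the path of T from u to v"
  is any path from u to v.\<close>
definition D_monotone_tree :: "point set \<Rightarrow> point set \<Rightarrow> point set set \<Rightarrow> bool" where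
  "D_monotone_tree D S E \<longleftrightarrow> spanning_tree S E \<and>
     (\<forall>u\<in>S. \<forall>v\<in>S. \<exists>d\<in>D. \<exists>ps. is_path S E ps \<and> hd ps = u \<and> last ps = v \<and> d_monotone d ps)"

definition degree :: "point set set \<Rightarrow> point \<Rightarrow> nat" where
  "degree E v = card {e\<in>E. v \<in> e}"

definition leaves :: "point set \<Rightarrow> point set set \<Rightarrow> point set" where
  "leaves S E = {v\<in>S. degree E v = 1}"

end

theory Submission imports Defs begin
lemma rot:
  fixes d z :: "real^2"
  assumes "d \<noteq> 0" "inner z d = 0"
  shows "\<exists>t. z = scaleR t (\<chi> i. if i = 1 then - (d$2) else d$1)"
proof -
  have ip: "z$1 * d$1 + z$2 * d$2 = 0" using assms(2) by (simp add: inner_vec_def sum_2)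
  have nz: "d$1 \<noteq> 0 \<or> d$2 \<noteq> 0" using assms(1) by (metis exhaust_2 vec_eq_iff zero_index)
  show ?thesis
  proof (cases "d$1 = 0")
    case True
    then have "d$2 \<noteq> 0" using nz by auto
    then have "z$2 = 0" using ip True by simp
    show ?thesis
      apply (rule exI[of _ "- z$1 / d$2"])
      apply (simp add: vec_eq_iff forall_2 True \<open>z$2 = 0\<close> \<open>d$2 \<noteq> 0\<close>)
      done
  next
    case False
    show ?thesis
      apply (rule exI[of _ "z$2 / d$1"])
      using ip False by (simp add: vec_eq_iff forall_2 field_simps)
  qed
qed

definition pat :: "(real^2) set \<Rightarrow> real^2 \<Rightarrow> (real^2) set" where
  "pat D w = {e\<in>D. inner w e > 0}"
definition pats :: "(real^2) set \<Rightarrow> (real^2) set set" where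
  "pats D = {pat D w | w. \<forall>e\<in>D. inner w e \<noteq> 0}"

lemma pats_finite: "finite D \<Longrightarrow> finite (pats D)"
  by (rule finite_subset[of _ "Pow D"]) (auto simp: pats_def pat_def)

lemma pats_card:
  assumes "finite D" "D \<noteq> {}" "0 \<notin> D"
  shows "card (pats D) \<le> 2 * card D"
  using assms
proof (induction D rule: finite_ne_induct)
  case (singleton d)
  have "card (pats {d}) \<le> card (Pow {d})"
    by (rule card_mono) (auto simp: pats_def pat_def)
  then show ?case by (simp add: card_Pow)
next
  case (insert d D)
  have d0: "d \<noteq> 0" using insert.prems by auto
  have IH: "card (pats D) \<le> 2 * card D" using insert by auto
  define r where "r = (\<chi> i. if i = 1 then - (d$2) else d$1 :: real^2)"
  define X1 where "X1 = {\<sigma>\<in>pats (insert d D). d \<notin> \<sigma>}"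
  define X2 where "X2 = {\<sigma>\<in>pats (insert d D). d \<in> \<sigma>}"
  define I2 where "I2 = (\<lambda>\<sigma>. \<sigma> - {d}) ` X2"
  have fin: "finite (pats (insert d D))" using insert by (intro pats_finite) auto
  have split: "pats (insert d D) = X1 \<union> X2" "X1 \<inter> X2 = {}" by (auto simp: X1_def X2_def)
  have cX: "card (pats (insert d D)) = card X1 + card X2"
    using split fin by (metis card_Un_disjoint finite_Un)
  have inj: "inj_on (\<lambda>\<sigma>. \<sigma> - {d}) X2" unfolding X2_def inj_on_def by blast
  have cI2: "card I2 = card X2" unfolding I2_def using inj by (simp add: card_image)
  have X1s: "X1 \<subseteq> pats D"
  proof
    fix \<sigma> assume "\<sigma> \<in> X1"
    then obtain w where w: "\<sigma> = pat (insert d D) w" "\<forall>e\<in>insert d D. inner w e \<noteq> 0" "d \<notin> \<sigma>"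
      by (auto simp: X1_def pats_def)
    then have "\<sigma> = pat D w" by (auto simp: pat_def)
    then show "\<sigma> \<in> pats D" using w by (auto simp: pats_def)
  qed
  have I2s: "I2 \<subseteq> pats D"
  proof
    fix \<tau> assume "\<tau> \<in> I2"
    then obtain w where w: "\<tau> = pat (insert d D) w - {d}" "\<forall>e\<in>insert d D. inner w e \<noteq> 0"
      by (auto simp: I2_def X2_def pats_def)
    then have "\<tau> = pat D w" using insert.hyps by (auto simp: pat_def)
    then show "\<tau> \<in> pats D" using w by (auto simp: pats_def)
  qed
  have Is: "X1 \<inter> I2 \<subseteq> {pat D r, pat D (-r)}"
  proof
    fix \<tau> assume "\<tau> \<in> X1 \<inter> I2"
    then obtain w w' where w: "\<tau> = pat (insert d D) w" "\<forall>e\<in>insert d D. inner w e \<noteq> 0" "d \<notin> \<tau>"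
      and w': "\<tau> = pat (insert d D) w' - {d}" "\<forall>e\<in>insert d D. inner w' e \<noteq> 0" "d \<in> pat (insert d D) w'"
      by (auto simp: X1_def I2_def X2_def pats_def)
    have wd: "inner w d < 0" using w by (auto simp: pat_def)
    have wd': "inner w' d > 0" using w' by (auto simp: pat_def)
    have same: "\<forall>e\<in>D. (inner w e > 0) = (inner w' e > 0)"
    proof
      fix e assume e: "e \<in> D"
      then have "e \<noteq> d" using insert.hyps by auto
      have "(e \<in> \<tau>) = (inner w e > 0)" using w(1) e by (auto simp: pat_def)
      moreover have "(e \<in> \<tau>) = (inner w' e > 0)" using w'(1) e \<open>e \<noteq> d\<close> by (auto simp: pat_def)
      ultimately show "(inner w e > 0) = (inner w' e > 0)" by simp
    qed
    define z where "z = inner w' d *\<^sub>R w - inner w d *\<^sub>R w'"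
    have zd: "inner z d = 0" by (simp add: z_def inner_diff_left)
    have ze: "(inner z e > 0) = (inner w e > 0) \<and> inner z e \<noteq> 0" if e: "e \<in> D" for e
    proof -
      have a: "inner w e \<noteq> 0" "inner w' e \<noteq> 0" using w(2) w'(2) e by auto
      have iz: "inner z e = inner w' d * inner w e + (- inner w d) * inner w' e"
        by (simp add: z_def inner_diff_left)
      have "- inner w d > 0" using wd by simp
      show ?thesis
      proof (cases "inner w e > 0")
        case True
        then have "inner w' e > 0" using same e by auto
        then show ?thesis unfolding iz using True wd wd' \<open>- inner w d > 0\<close>
          by (smt (verit) mult_pos_pos)
      next
        case False
        then have "inner w e < 0" using a by auto
        moreover have "inner w' e < 0" using same e False a by (meson linorder_neqE_linordered_idom)
        ultimately show ?thesis unfolding iz using wd wd' \<open>- inner w d > 0\<close>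
          by (smt (verit) mult_pos_neg)
      qed
    qed
    obtain t where t: "z = t *\<^sub>R r" using rot[OF d0 zd] unfolding r_def by blast
    obtain e0 where e0: "e0 \<in> D" using insert.hyps by auto
    have "t \<noteq> 0" using ze[OF e0] t by auto
    have tau: "\<tau> = pat D z"
    proof -
      have "\<tau> = pat D w" using w insert.hyps by (auto simp: pat_def)
      then show ?thesis using ze by (auto simp: pat_def)
    qed
    show "\<tau> \<in> {pat D r, pat D (-r)}"
    proof (cases "t > 0")
      case True
      then have "pat D z = pat D r" unfolding t pat_def by (auto simp: zero_less_mult_iff)
      then show ?thesis using tau by simp
    next
      case False
      then have "t < 0" using \<open>t \<noteq> 0\<close> by auto
      then have "pat D z = pat D (-r)" unfolding t pat_def by (auto simp: zero_less_mult_iff)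
      then show ?thesis using tau by simp
    qed
  qed
  have finD: "finite (pats D)" using insert by (simp add: pats_finite)
  have "card X1 + card I2 = card (X1 \<union> I2) + card (X1 \<inter> I2)"
    using X1s I2s finD by (metis card_Un_Int finite_subset)
  also have "\<dots> \<le> card (pats D) + 2"
  proof -
    have "card (X1 \<union> I2) \<le> card (pats D)" using X1s I2s finD by (intro card_mono) auto
    moreover have "card {pat D r, pat D (-r)} \<le> 2"
      by (cases "pat D r = pat D (-r)") auto
    moreover have "card (X1 \<inter> I2) \<le> card {pat D r, pat D (-r)}"
      by (rule card_mono[OF _ Is]) simp
    ultimately show ?thesis by simp
  qed
  finally show ?case using cX cI2 IH insert.hyps by simp
qed

lemma leaf_nb:
  assumes "graph S E" "u \<in> leaves S E"
  shows "\<exists>x. x \<noteq> u \<and> {u,x} \<in> E \<and> (\<forall>y. {u,y} \<in> E \<longrightarrow> y = u \<or> y = x)"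
proof -
  have "card {e\<in>E. u \<in> e} = 1" using assms(2) by (simp add: leaves_def degree_def)
  then obtain e0 where e0: "{e\<in>E. u \<in> e} = {e0}" by (auto simp: card_1_singleton_iff)
  then have "e0 \<in> E" "u \<in> e0" by auto
  then have "card e0 = 2" using assms(1) by (auto simp: graph_def)
  then obtain a b where ab: "e0 = {a,b}" "a \<noteq> b" by (auto simp: card_2_iff)
  obtain x where x: "e0 = {u,x}" "x \<noteq> u" using ab \<open>u \<in> e0\<close> by (metis insert_commute insertE singletonD)
  show ?thesis
  proof (intro exI conjI allI impI)
    show "x \<noteq> u" "{u,x} \<in> E" using x \<open>e0 \<in> E\<close> by auto
    fix y assume "{u,y} \<in> E"
    then have "{u,y} \<in> {e\<in>E. u \<in> e}" by auto
    then have "{u,y} = {u,x}" using e0 x by auto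
    then show "y = u \<or> y = x" by (metis doubleton_eq_iff)
  qed
qed

theorem lemma7:
  fixes S :: "(real^2) set" and D :: "(real^2) set" and E :: "(real^2) set set" and k :: nat
  assumes "finite S"
    and "finite D" and "card D = k"
    and "\<forall>d\<in>D. direction d"
    and "\<forall>d\<in>D. \<forall>d'\<in>D. \<not> opposite d d'"
    and "D_general_position D S"
    and "D_monotone_tree D S E"
  shows "card (leaves S E) \<le> 2 * k"
proof (cases "D = {}")
  case True
  have "S = {}"
  proof (rule ccontr)
    assume "S \<noteq> {}"
    then obtain u where "u \<in> S" by auto
    then show False using assms(7) True by (auto simp: D_monotone_tree_def)
  qed
  then show ?thesis by (simp add: leaves_def)
next
  case False
  have gr: "graph S E" using assms(7) by (simp add: D_monotone_tree_def spanning_tree_def)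
  define nb where "nb u = (SOME x. x \<noteq> u \<and> {u,x} \<in> E \<and> (\<forall>y. {u,y} \<in> E \<longrightarrow> y = u \<or> y = x))" for u
  have nb: "nb u \<noteq> u \<and> {u,nb u} \<in> E \<and> (\<forall>y. {u,y} \<in> E \<longrightarrow> y = u \<or> y = nb u)"
    if "u \<in> leaves S E" for u
    unfolding nb_def by (rule someI_ex[OF leaf_nb[OF gr that]])
  have nbS: "nb u \<in> S" if "u \<in> leaves S E" for u
    using nb[OF that] gr by (auto simp: graph_def)
  have uS: "u \<in> S" if "u \<in> leaves S E" for u using that by (simp add: leaves_def)
  define f where "f u = pat D (nb u - u)" for u
  have fin: "f ` leaves S E \<subseteq> pats D"
  proof
    fix \<sigma> assume "\<sigma> \<in> f ` leaves S E"
    then obtain u where u: "u \<in> leaves S E" "\<sigma> = f u" by auto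
    have "\<forall>e\<in>D. inner (nb u - u) e \<noteq> 0"
    proof
      fix e assume "e \<in> D"
      then have "d_general_position e S" using assms(6) by (simp add: D_general_position_def)
      then have "inner (nb u) e \<noteq> inner u e" using nbS[OF u(1)] uS[OF u(1)] nb[OF u(1)]
        by (simp add: d_general_position_def)
      then show "inner (nb u - u) e \<noteq> 0" by (simp add: inner_diff_left)
    qed
    then show "\<sigma> \<in> pats D" using u by (auto simp: pats_def f_def)
  qed
  have inj: "inj_on f (leaves S E)"
  proof (rule inj_onI, rule ccontr)
    fix u v assume u: "u \<in> leaves S E" and v: "v \<in> leaves S E" and fe: "f u = f v" and "u \<noteq> v"
    obtain d ps where d: "d \<in> D" and ps: "is_path S E ps" "hd ps = u" "last ps = v" "d_monotone d ps"
    proof -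
      have "\<forall>u\<in>S. \<forall>v\<in>S. \<exists>d\<in>D. \<exists>ps. is_path S E ps \<and> hd ps = u \<and> last ps = v \<and> d_monotone d ps"
        using assms(7) by (simp add: D_monotone_tree_def)
      then show ?thesis using that uS[OF u] uS[OF v] by blast
    qed
    define n where "n = length ps"
    have ne: "ps \<noteq> []" and dist: "distinct ps" and adj: "\<And>i. Suc i < n \<Longrightarrow> {ps!i, ps!Suc i} \<in> E"
      using ps(1) by (auto simp: is_path_def n_def)
    have n2: "n \<ge> 2"
    proof (rule ccontr)
      assume "\<not> n \<ge> 2"
      moreover have "n \<noteq> 0" using ne n_def by simp
      ultimately have "n = 1" by linarith
      then have "hd ps = last ps" using ne n_def by (cases ps) auto
      then show False using ps \<open>u \<noteq> v\<close> by simp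
    qed
    have p0: "ps!0 = u" using ps(2) ne by (simp add: hd_conv_nth)
    have pn: "ps!(n-1) = v" using ps(3) ne by (simp add: last_conv_nth n_def)
    have e1: "{u, ps!1} \<in> E" using adj[of 0] n2 p0 by simp
    have "1 < length ps" "0 < length ps" using n2 n_def by auto
    then have "ps!1 \<noteq> ps!0" using dist nth_eq_iff_index_eq[OF dist, of 1 0] by auto
    then have d1: "ps!1 \<noteq> u" using p0 by simp
    have "ps!1 = u \<or> ps!1 = nb u" using nb[OF u] e1 by blast
    then have nbu: "nb u = ps!1" using d1 by simp
    have "Suc (n-2) = n - 1" "Suc (n-2) < n" using n2 by auto
    then have e2: "{ps!(n-2), v} \<in> E" using adj[of "n-2"] pn by simp
    have "n-2 < length ps" "n-1 < length ps" "n-2 \<noteq> n-1" using n2 n_def by auto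
    then have "ps!(n-2) \<noteq> ps!(n-1)" using nth_eq_iff_index_eq[OF dist, of "n-2" "n-1"] by auto
    then have d2: "ps!(n-2) \<noteq> v" using pn by simp
    have "{v, ps!(n-2)} \<in> E" using e2 by (simp add: insert_commute)
    then have "ps!(n-2) = v \<or> ps!(n-2) = nb v" using nb[OF v] by blast
    then have nbv: "nb v = ps!(n-2)" using d2 by simp
    let ?m = "map (\<lambda>p. inner p d) ps"
    have mono: "sorted_wrt (<) ?m \<or> sorted_wrt (>) ?m" using ps(4) by (simp add: d_monotone_def)
    have l1: "?m!0 = inner u d" "?m!1 = inner (nb u) d" "?m!(n-2) = inner (nb v) d" "?m!(n-1) = inner v d"
    proof -
      have li: "\<And>i. i < n \<Longrightarrow> ?m!i = inner (ps!i) d" by (simp add: n_def)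
      have "0 < n" "1 < n" "n-2 < n" "n-1 < n" using n2 by auto
      then show "?m!0 = inner u d" "?m!1 = inner (nb u) d" "?m!(n-2) = inner (nb v) d" "?m!(n-1) = inner v d"
        using li p0 pn nbu nbv by simp_all
    qed
    have len: "length ?m = n" by (simp add: n_def)
    from mono show False
    proof
      assume s: "sorted_wrt (<) ?m"
      have H: "\<And>i j. i < j \<Longrightarrow> j < n \<Longrightarrow> (<) (?m!i) (?m!j)"
        using s len unfolding sorted_wrt_iff_nth_less by metis
      have "0 < (1::nat)" "1 < n" "n-2 < n-1" "n-1 < n" using n2 by auto
      then have "?m!0 < ?m!1" "?m!(n-2) < ?m!(n-1)" using H by blast+
      then have "inner (nb u - u) d > 0" "\<not> inner (nb v - v) d > 0" using l1 by (auto simp: inner_diff_left)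
      then have "d \<in> f u" "d \<notin> f v" using d by (auto simp: f_def pat_def)
      then show False using fe by simp
    next
      assume s: "sorted_wrt (>) ?m"
      have H: "\<And>i j. i < j \<Longrightarrow> j < n \<Longrightarrow> (>) (?m!i) (?m!j)"
        using s len unfolding sorted_wrt_iff_nth_less by metis
      have "0 < (1::nat)" "1 < n" "n-2 < n-1" "n-1 < n" using n2 by auto
      then have "?m!0 > ?m!1" "?m!(n-2) > ?m!(n-1)" using H by blast+
      then have "\<not> inner (nb u - u) d > 0" "inner (nb v - v) d > 0" using l1 by (auto simp: inner_diff_left)
      then have "d \<notin> f u" "d \<in> f v" using d by (auto simp: f_def pat_def)
      then show False using fe by simp
    qed
  qed
  have "0 \<notin> D" using assms(4) by (auto simp: direction_def)
  have "card (leaves S E) = card (f ` leaves S E)" using inj by (simp add: card_image)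
  also have "\<dots> \<le> card (pats D)" using fin pats_finite[OF assms(2)] by (rule card_mono[rotated])
  also have "\<dots> \<le> 2 * card D" using pats_card[OF assms(2) False \<open>0 \<notin> D\<close>] .
  finally show ?thesis using assms(3) by simp
qed

end
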